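(* Let $0<c\le1$ and let $$X=\Big\{\sum_{i,j\in\mathbb Z}|\lambda_{i,j}-\lambda_{i,j+1}|^2 \ :\ \lambda_{i,j}\in\mathbb C,\ \sum_{i,j\in\mathbb Z}|\lambda_{i,j}|^2\le1,\ \sum_{i\in\mathbb Z}|\lambda_{i,0}|^2\ge c^2\Big\}\subset\mathbb R_{\ge0}.$$ Then $\frac{c^4}{3+18c^2}$ is a lower bound for $X$. *)

theory Defs
  imports "HOL-Analysis.Analysis"
begin

end

theory Submission
  imports Defs
begin

lemma tele:
  fixes f :: "int \<Rightarrow> real"
  shows "2 * f 0 - f (int N) - f (- int N) \<le> (\<Sum>k\<in>{- int N..<int N}. \<bar>f k - f (k+1)\<bar>)"
proof (induction N)
  case 0 then show ?case by simp
next
  case (Suc N)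
  define M where "M = int N"
  have "M \<ge> 0" unfolding M_def by simp
  have s: "int (Suc N) = M + 1" "- int (Suc N) = -M - 1" unfolding M_def by simp_all
  have IH: "2 * f 0 - f M - f (- M) \<le> (\<Sum>k\<in>{- M..<M}. \<bar>f k - f (k+1)\<bar>)"
    using Suc.IH unfolding M_def .
  have e: "{-M-1..<M+1} = insert (-M-1) (insert M {-M..<M})"
    using \<open>M \<ge> 0\<close> by auto
  have "(\<Sum>k\<in>{-M-1..<M+1}. \<bar>f k - f (k+1)\<bar>)
      = \<bar>f (-M-1) - f (-M-1+1)\<bar> + (\<bar>f M - f (M + 1)\<bar> + (\<Sum>k\<in>{-M..<M}. \<bar>f k - f (k+1)\<bar>))"
    unfolding e using \<open>M \<ge> 0\<close> by simp
  moreover have "f (-M-1+1) = f (-M)" by simp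
  moreover have h2: "- (M + 1) = -M - 1" by simp
  ultimately show ?case unfolding s h2 using IH by linarith
qed

lemma keyineq:
  fixes x y :: complex and t :: real
  assumes "t > 0"
  shows "\<bar>(cmod x)\<^sup>2 - (cmod y)\<^sup>2\<bar> \<le> t/2 * (cmod (x - y))\<^sup>2 + ((cmod x)\<^sup>2 + (cmod y)\<^sup>2) / t"
proof -
  let ?p = "cmod x" and ?q = "cmod y" and ?u = "cmod (x - y)"
  have h: "\<bar>?p - ?q\<bar> \<le> ?u" by (rule norm_triangle_ineq3)
  have "\<bar>?p\<^sup>2 - ?q\<^sup>2\<bar> = \<bar>?p - ?q\<bar> * (?p + ?q)"
  proof -
    have "?p\<^sup>2 - ?q\<^sup>2 = (?p - ?q) * (?p + ?q)" by (simp add: power2_eq_square algebra_simps)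
    moreover have "\<bar>(?p - ?q) * (?p + ?q)\<bar> = \<bar>?p - ?q\<bar> * (?p + ?q)"
      by (simp only: abs_mult) simp
    ultimately show ?thesis by simp
  qed
  also have "\<dots> \<le> ?u * (?p + ?q)" using h by (simp add: mult_right_mono)
  also have "\<dots> \<le> t/2 * ?u\<^sup>2 + (?p + ?q)\<^sup>2 / (2*t)"
  proof -
    have "0 \<le> (t * ?u - (?p + ?q))\<^sup>2" by simp
    then have "2 * t * (?u * (?p + ?q)) \<le> t\<^sup>2 * ?u\<^sup>2 + (?p + ?q)\<^sup>2"
      by (simp add: power2_eq_square algebra_simps)
    then show ?thesis using assms by (simp add: field_simps power2_eq_square)
  qed
  also have "\<dots> \<le> t/2 * ?u\<^sup>2 + (?p\<^sup>2 + ?q\<^sup>2) / t"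
  proof -
    have "0 \<le> (?p - ?q)\<^sup>2" by simp
    then have "(?p + ?q)\<^sup>2 \<le> 2 * (?p\<^sup>2 + ?q\<^sup>2)"
      by (simp add: power2_eq_square algebra_simps)
    then have "(?p + ?q)\<^sup>2 / (2*t) \<le> 2 * (?p\<^sup>2 + ?q\<^sup>2) / (2*t)"
      by (rule divide_right_mono) (use assms in simp)
    moreover have "2 * (?p\<^sup>2 + ?q\<^sup>2) / (2*t) = (?p\<^sup>2 + ?q\<^sup>2) / t"
      by (rule mult_divide_mult_cancel_left) simp
    ultimately show ?thesis by linarith
  qed
  finally show ?thesis .
qed

lemma dd_bound:
  fixes x y :: complex
  shows "(cmod (x - y))\<^sup>2 \<le> 2 * (cmod x)\<^sup>2 + 2 * (cmod y)\<^sup>2"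
proof -
  have "cmod (x - y) \<le> cmod x + cmod y" by (rule norm_triangle_ineq4)
  then have "(cmod (x - y))\<^sup>2 \<le> (cmod x + cmod y)\<^sup>2"
    by (rule power_mono) simp
  moreover have "0 \<le> (cmod x - cmod y)\<^sup>2" by simp
  then have "(cmod x + cmod y)\<^sup>2 \<le> 2 * (cmod x)\<^sup>2 + 2 * (cmod y)\<^sup>2"
    by (simp add: power2_eq_square algebra_simps)
  ultimately show ?thesis by linarith
qed

theorem lemma6p8:
  fixes c :: real and l :: "int \<times> int \<Rightarrow> complex"
  assumes "0 < c" and "c \<le> 1"
    and "(\<lambda>p. (cmod (l p))\<^sup>2) summable_on UNIV"
    and "(\<Sum>\<^sub>\<infinity>p. (cmod (l p))\<^sup>2) \<le> 1"
    and "(\<Sum>\<^sub>\<infinity>i. (cmod (l (i, 0)))\<^sup>2) \<ge> c\<^sup>2"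
  shows "c ^ 4 / (3 + 18 * c\<^sup>2) \<le> (\<Sum>\<^sub>\<infinity>(i, j). (cmod (l (i, j) - l (i, j + 1)))\<^sup>2)"
proof -
  define a where "a = (\<lambda>p. (cmod (l p))\<^sup>2)"
  define sh where "sh = (\<lambda>p::int\<times>int. (fst p, snd p + 1))"
  define dd where "dd = (\<lambda>p. (cmod (l p - l (sh p)))\<^sup>2)"
  define r where "r = (\<lambda>i. (cmod (l (i, 0)))\<^sup>2)"
  define D where "D = infsum dd UNIV"
  have Deq: "(\<Sum>\<^sub>\<infinity>(i, j). (cmod (l (i, j) - l (i, j + 1)))\<^sup>2) = D"
    unfolding D_def dd_def sh_def
    by (intro arg_cong[where f="\<lambda>f. infsum f UNIV"] ext) (simp add: case_prod_beta)
  have anz: "\<And>p. 0 \<le> a p" unfolding a_def by simp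
  have ddnz: "\<And>p. 0 \<le> dd p" unfolding dd_def by simp
  have Sa: "a summable_on UNIV" using assms(3) unfolding a_def .
  have Ia: "infsum a UNIV \<le> 1" using assms(4) unfolding a_def .
  have Ir: "c\<^sup>2 \<le> infsum r UNIV" using assms(5) unfolding r_def .
  have injsh: "inj sh" unfolding sh_def inj_def by auto
  have surjsh: "sh ` UNIV = UNIV"
  proof -
    have "p = sh (fst p, snd p - 1)" for p unfolding sh_def by simp
    then show ?thesis by (metis UNIV_I UNIV_eq_I imageI)
  qed
  have Ssh: "(\<lambda>p. a (sh p)) summable_on UNIV"
    using summable_on_reindex[OF injsh, of a] Sa surjsh by (simp add: comp_def)
  have Sdd: "dd summable_on UNIV"
  proof (rule summable_on_comparison_test)
    show "(\<lambda>p. 2 * a p + 2 * a (sh p)) summable_on UNIV"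
      using summable_on_add[OF summable_on_cmult_right[OF Sa] summable_on_cmult_right[OF Ssh]]
      by simp
    show "dd p \<le> 2 * a p + 2 * a (sh p)" for p
      unfolding dd_def a_def by (rule dd_bound)
    show "0 \<le> dd p" for p by (rule ddnz)
  qed
  have injr: "inj (\<lambda>i::int. (i, 0::int))" by (auto simp: inj_def)
  have Sr: "r summable_on UNIV"
  proof -
    have "a summable_on ((\<lambda>i::int. (i, 0::int)) ` UNIV)"
      by (rule summable_on_subset[OF Sa]) simp
    then show ?thesis using summable_on_reindex[OF injr, of a]
      by (simp add: comp_def a_def r_def)
  qed
  define t where "t = 2 / c\<^sup>2"
  have tpos: "t > 0" unfolding t_def using assms(1) by simp
  have main: "c\<^sup>2 - 4 * e \<le> D / c\<^sup>2" if epos: "e > 0" for e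
  proof -
    have "(r has_sum infsum r UNIV) UNIV" using Sr by (rule has_sum_infsum)
    then have "\<forall>\<^sub>F F in finite_subsets_at_top UNIV. dist (sum r F) (infsum r UNIV) < e"
      unfolding has_sum_def tendsto_iff using epos by blast
    then obtain F where Ffin: "finite F" and Fd: "dist (sum r F) (infsum r UNIV) < e"
      unfolding eventually_finite_subsets_at_top by blast
    have SF: "c\<^sup>2 - e \<le> sum r F" using Fd Ir unfolding dist_real_def by linarith
    define \<delta> where "\<delta> = e / (real (card F) + 1)"
    have dpos: "\<delta> > 0" unfolding \<delta>_def using epos by simp
    have cd: "real (card F) * \<delta> \<le> e"
    proof -
      have "real (card F) * \<delta> = e * (real (card F) / (real (card F) + 1))"
        unfolding \<delta>_def by simp
      also have "\<dots> \<le> e * 1" using epos by (intro mult_left_mono) auto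
      finally show ?thesis by simp
    qed
    define B where "B = {p. \<delta> \<le> a p}"
    have Bfin: "finite B"
    proof (rule ccontr)
      assume inf: "infinite B"
      define n where "n = nat \<lceil>1 / \<delta>\<rceil> + 1"
      obtain T where T: "finite T" "card T = n" "T \<subseteq> B"
        using infinite_arbitrarily_large[OF inf] by blast
      have "real (card T) * \<delta> \<le> sum a T"
        using sum_bounded_below[of T \<delta> a] T unfolding B_def by auto
      moreover have "sum a T \<le> infsum a UNIV"
        using finite_sum_le_infsum[OF Sa T(1)] anz by simp
      moreover have "real n * \<delta> > 1"
      proof -
        have "real n > 1 / \<delta>" unfolding n_def by linarith
        then show ?thesis using dpos by (simp add: field_simps)
      qed
      ultimately show False using Ia T(2) by simp
    qed
    define M where "M = Max (insert 0 ((\<lambda>p. \<bar>snd p\<bar>) ` B))"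
    have M0: "M \<ge> 0" unfolding M_def using Bfin by simp
    have MB: "\<bar>snd p\<bar> \<le> M" if "p \<in> B" for p
      unfolding M_def using Bfin that by (intro Max_ge) auto
    define N where "N = nat (M + 1)"
    have NM: "int N = M + 1" unfolding N_def using M0 by simp
    have small1: "a (i, int N) < \<delta>" for i
    proof (rule ccontr)
      assume "\<not> a (i, int N) < \<delta>"
      then have "(i, int N) \<in> B" unfolding B_def by simp
      then show False using MB[of "(i, int N)"] NM by simp
    qed
    have small2: "a (i, - int N) < \<delta>" for i
    proof (rule ccontr)
      assume "\<not> a (i, - int N) < \<delta>"
      then have "(i, - int N) \<in> B" unfolding B_def by simp
      then show False using MB[of "(i, - int N)"] NM by simp
    qed
    define K where "K = {- int N..<int N}"
    define g where "g = (\<lambda>p. t/2 * dd p + (a p + a (sh p)) / t)"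
    have row: "2 * r i - 2 * \<delta> \<le> (\<Sum>k\<in>K. g (i, k))" for i
    proof -
      have "2 * a (i, 0) - a (i, int N) - a (i, - int N) \<le> (\<Sum>k\<in>K. \<bar>a (i, k) - a (i, k + 1)\<bar>)"
        unfolding K_def by (rule tele[of "\<lambda>k. a (i, k)"])
      also have "\<dots> \<le> (\<Sum>k\<in>K. g (i, k))"
      proof (rule sum_mono)
        fix k
        show "\<bar>a (i, k) - a (i, k + 1)\<bar> \<le> g (i, k)"
          unfolding g_def a_def dd_def sh_def using keyineq[OF tpos, of "l (i, k)" "l (i, k+1)"]
          by simp
      qed
      finally show ?thesis using small1[of i] small2[of i] unfolding r_def a_def by simp
    qed
    define G where "G = F \<times> K"
    have Gfin: "finite G" unfolding G_def K_def using Ffin by simp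
    have "2 * sum r F - 2 * real (card F) * \<delta> = (\<Sum>i\<in>F. 2 * r i - 2 * \<delta>)"
      by (simp add: sum_subtractf sum_distrib_left)
    also have "\<dots> \<le> (\<Sum>i\<in>F. \<Sum>k\<in>K. g (i, k))" by (rule sum_mono) (rule row)
    also have "\<dots> = sum g G" unfolding G_def by (simp add: sum.cartesian_product)
    also have "\<dots> = t/2 * sum dd G + (sum a G + sum (\<lambda>p. a (sh p)) G) / t"
      unfolding g_def by (simp add: sum.distrib sum_distrib_left sum_divide_distrib[symmetric])
    also have "\<dots> \<le> t/2 * D + (1 + 1) / t"
    proof -
      have "sum dd G \<le> D" unfolding D_def
        using finite_sum_le_infsum[OF Sdd Gfin] ddnz by simp
      moreover have "sum a G \<le> 1"
        using finite_sum_le_infsum[OF Sa Gfin] anz Ia by simp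
      moreover have "sum (\<lambda>p. a (sh p)) G \<le> 1"
      proof -
        have "sum (\<lambda>p. a (sh p)) G = sum a (sh ` G)"
        proof -
          have "inj_on sh G" using injsh by (rule inj_on_subset) simp
          from sum.reindex[OF this, of a] show ?thesis by (simp add: comp_def)
        qed
        also have "\<dots> \<le> infsum a UNIV"
          using finite_sum_le_infsum[OF Sa finite_imageI[OF Gfin]] anz by simp
        finally show ?thesis using Ia by simp
      qed
      ultimately show ?thesis using tpos
        by (intro add_mono mult_left_mono divide_right_mono) auto
    qed
    finally have "2 * sum r F - 2 * real (card F) * \<delta> \<le> t / 2 * D + 2 / t" by simp
    moreover have "t / 2 * D + 2 / t = D / c\<^sup>2 + c\<^sup>2"
      unfolding t_def using assms(1) by (simp add: field_simps)
    ultimately show ?thesis using SF cd by linarith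
  qed
  have c4: "c ^ 4 \<le> D"
  proof (rule field_le_epsilon)
    fix e :: real assume "0 < e"
    define e' where "e' = e / (4 * c\<^sup>2)"
    have "e' > 0" unfolding e'_def using \<open>0 < e\<close> assms(1) by simp
    from main[OF this] have "c\<^sup>2 - 4 * e' \<le> D / c\<^sup>2" .
    then have "(c\<^sup>2 - 4 * e') * c\<^sup>2 \<le> D"
      using assms(1) by (simp add: pos_le_divide_eq)
    moreover have "(c\<^sup>2 - 4 * e') * c\<^sup>2 = c ^ 4 - e"
      unfolding e'_def using assms(1) by (simp add: field_simps power2_eq_square power4_eq_xxxx)
    ultimately show "c ^ 4 \<le> D + e" by linarith
  qed
  have "c ^ 4 / (3 + 18 * c\<^sup>2) \<le> c ^ 4"
  proof -
    have "1 \<le> 3 + 18 * c\<^sup>2" by (simp add: add_increasing)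
    then have "c ^ 4 / (3 + 18 * c\<^sup>2) \<le> c ^ 4 / 1"
      by (intro divide_left_mono) (auto intro: add_pos_nonneg)
    then show ?thesis by simp
  qed
  then show ?thesis unfolding Deq using c4 by linarith
qed

end
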